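(* For $n = 3$, the Eigenvector Method satisfies invariance to $\alpha$-transformation on a triad; hence a counterexample showing that the Eigenvector Method violates this invariance requires at least $n=4$ alternatives.
   Context: A pairwise comparison matrix of size $n$ is a matrix $\mathbf{A} = [a_{i,j}]$ with positive entries and $a_{j,i} = 1/a_{i,j}$ for all $i,j$. The Eigenvector Method assigns to $\mathbf{A}$ the vector $\mathbf{w}$ with positive entries, $\sum_i w_i = 1$, and $\mathbf{A}\mathbf{w} = \lambda_{\max}\mathbf{w}$, where $\lambda_{\max}$ is the Perron eigenvalue of $\mathbf{A}$. An $\alpha$-transformation on the triad $(i,j,k)$ (three distinct indices), with $\alpha>0$, maps $\mathbf{A}$ to $\hat{\mathbf{A}}$ with $\hat a_{i,j} = \alpha a_{i,j}$, $\hat a_{j,i} = a_{j,i}/\alpha$, $\hat a_{j,k} = \alpha a_{j,k}$, $\hat a_{k,j} = a_{k,j}/\alpha$, $\hat a_{k,i} = \alpha a_{k,i}$, $\hat a_{i,k} = a_{i,k}/\alpha$, all other entries unchanged. A weighting method $f$ is invariant to $\alpha$-transformation on a triad if $f(\mathbf{A}) = f(\hat{\mathbf{A}})$ whenever $\hat{\mathbf{A}}$ arises from $\mathbf{A}$ by such a transformation. (For $n \le 2$ there are no triads, so the invariance holds vacuously.) *)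

theory Defs
  imports Complex_Main
begin

text \<open>Matrices of size n are represented as functions nat => nat => real,
  with only the indices 0..n-1 being relevant.\<close>

definition pcm :: "nat \<Rightarrow> (nat \<Rightarrow> nat \<Rightarrow> real) \<Rightarrow> bool" where
  "pcm n A \<longleftrightarrow> (\<forall>i<n. \<forall>j<n. A i j > 0 \<and> A j i = 1 / A i j)"

definition eigenvalues :: "nat \<Rightarrow> (nat \<Rightarrow> nat \<Rightarrow> real) \<Rightarrow> complex set" where
  "eigenvalues n A = {z. \<exists>v :: nat \<Rightarrow> complex. (\<exists>i<n. v i \<noteq> 0) \<and>
      (\<forall>i<n. (\<Sum>j<n. complex_of_real (A i j) * v j) = z * v i)}"

definition perron_eigenvalue :: "nat \<Rightarrow> (nat \<Rightarrow> nat \<Rightarrow> real) \<Rightarrow> real" where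
  "perron_eigenvalue n A = Sup (cmod ` eigenvalues n A)"

definition EM :: "nat \<Rightarrow> (nat \<Rightarrow> nat \<Rightarrow> real) \<Rightarrow> (nat \<Rightarrow> real)" where
  "EM n A = (THE w. (\<forall>i<n. w i > 0) \<and> (\<forall>i\<ge>n. w i = 0) \<and> (\<Sum>i<n. w i) = 1 \<and>
      (\<forall>i<n. (\<Sum>j<n. A i j * w j) = perron_eigenvalue n A * w i))"

definition alpha_transform ::
  "(nat \<Rightarrow> nat \<Rightarrow> real) \<Rightarrow> nat \<Rightarrow> nat \<Rightarrow> nat \<Rightarrow> real \<Rightarrow> (nat \<Rightarrow> nat \<Rightarrow> real)" where
  "alpha_transform A i j k \<alpha> = (\<lambda>p q.
     if (p, q) = (i, j) \<or> (p, q) = (j, k) \<or> (p, q) = (k, i) then \<alpha> * A p q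
     else if (p, q) = (j, i) \<or> (p, q) = (k, j) \<or> (p, q) = (i, k) then A p q / \<alpha>
     else A p q)"

end

theory Submission
  imports Defs
begin

lemma EM_general:
  fixes A :: "nat \<Rightarrow> nat \<Rightarrow> real" and g :: "nat \<Rightarrow> real" and l :: real
  assumes n: "0 < n" and Apos: "\<And>i j. i<n \<Longrightarrow> j<n \<Longrightarrow> A i j > 0"
    and gpos: "\<And>i. i<n \<Longrightarrow> g i > 0"
    and eig: "\<And>i. i<n \<Longrightarrow> (\<Sum>j<n. A i j * g j) = l * g i"
  shows "EM n A = (\<lambda>i. if i<n then g i / (\<Sum>j<n. g j) else 0)"
proof -
  have "(\<Sum>j<n. A 0 j * g j) > 0"
    using n by (intro sum_pos) (auto intro!: mult_pos_pos Apos gpos)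
  hence "l * g 0 > 0" using eig n by simp
  hence lpos: "l > 0" using gpos[OF n] by (simp add: zero_less_mult_iff)
  have in_eig: "complex_of_real l \<in> eigenvalues n A"
    unfolding eigenvalues_def
  proof (intro CollectI exI[of _ "\<lambda>j. complex_of_real (g j)"] conjI allI impI)
    show "\<exists>i<n. complex_of_real (g i) \<noteq> 0" using n gpos[OF n] by (intro exI[of _ 0]) auto
  next
    fix i assume i: "i < n"
    have "complex_of_real (\<Sum>j<n. A i j * g j) = complex_of_real (l * g i)" using eig[OF i] by simp
    then show "(\<Sum>j<n. complex_of_real (A i j) * complex_of_real (g j)) = complex_of_real l * complex_of_real (g i)"
      by simp
  qed
  have bound: "cmod z \<le> l" if z: "z \<in> eigenvalues n A" for z
  proof -
    obtain v where v1: "\<exists>i<n. v i \<noteq> 0"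
      and v2: "\<forall>i<n. (\<Sum>j<n. complex_of_real (A i j) * v j) = z * v i"
      using z unfolding eigenvalues_def by blast
    define f where "f i = cmod (v i) / g i" for i
    define m where "m = Max (f ` {..<n})"
    have fin: "finite (f ` {..<n})" and ne: "f ` {..<n} \<noteq> {}" using n by auto
    have mge: "f j \<le> m" if "j < n" for j unfolding m_def using fin that by (intro Max_ge) auto
    obtain i0 where i0: "i0 < n" "f i0 = m" using Max_in[OF fin ne] unfolding m_def by auto
    obtain i1 where i1: "i1 < n" "v i1 \<noteq> 0" using v1 by blast
    have "f i1 > 0" unfolding f_def using i1 gpos by auto
    hence mpos: "m > 0" using mge[OF i1(1)] by linarith
    have vi0: "cmod (v i0) = m * g i0" using i0 gpos[OF i0(1)] unfolding f_def by (auto simp: field_simps)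
    have vpos: "cmod (v i0) > 0" using vi0 mpos gpos[OF i0(1)] by simp
    have vj: "cmod (v j) \<le> m * g j" if "j < n" for j
      using mge[OF that] gpos[OF that] unfolding f_def by (simp add: pos_divide_le_eq)
    have "cmod z * cmod (v i0) = cmod (\<Sum>j<n. complex_of_real (A i0 j) * v j)"
      using v2 i0 by (simp add: norm_mult)
    also have "\<dots> \<le> (\<Sum>j<n. cmod (complex_of_real (A i0 j) * v j))" by (rule norm_sum)
    also have "\<dots> = (\<Sum>j<n. A i0 j * cmod (v j))"
      using Apos i0 by (intro sum.cong) (auto simp: norm_mult less_imp_le)
    also have "\<dots> \<le> (\<Sum>j<n. A i0 j * (m * g j))"
      using Apos i0 vj by (intro sum_mono mult_left_mono) (auto simp: less_imp_le)
    also have "\<dots> = m * (\<Sum>j<n. A i0 j * g j)" by (simp add: sum_distrib_left algebra_simps)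
    also have "\<dots> = l * cmod (v i0)" using eig[OF i0(1)] vi0 by simp
    finally show ?thesis using vpos by simp
  qed
  have perron: "perron_eigenvalue n A = l"
    unfolding perron_eigenvalue_def
  proof (rule cSup_eq_maximum)
    show "l \<in> cmod ` eigenvalues n A" using in_eig lpos by (intro image_eqI[of _ _ "complex_of_real l"]) auto
  next
    fix x assume "x \<in> cmod ` eigenvalues n A" then show "x \<le> l" using bound by auto
  qed
  define S where "S = (\<Sum>j<n. g j)"
  have Spos: "S > 0" unfolding S_def using n gpos by (intro sum_pos) auto
  show ?thesis
    unfolding EM_def perron S_def[symmetric]
  proof (rule the_equality, intro conjI allI impI)
    fix i assume "i < n" then show "0 < (if i < n then g i / S else 0)" using gpos Spos by simp
  next
    fix i assume "n \<le> i" then show "(if i < n then g i / S else 0) = 0" by simp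
  next
    show "(\<Sum>i<n. if i < n then g i / S else 0) = 1"
      using Spos by (simp add: sum_divide_distrib[symmetric] S_def)
  next
    fix i assume i: "i < n"
    have "(\<Sum>j<n. A i j * (if j < n then g j / S else 0)) = (\<Sum>j<n. A i j * g j) / S"
      by (simp add: sum_divide_distrib)
    then show "(\<Sum>j<n. A i j * (if j < n then g j / S else 0)) = l * (if i < n then g i / S else 0)"
      using eig[OF i] i by simp
  next
    fix w assume w: "(\<forall>i<n. 0 < w i) \<and> (\<forall>i\<ge>n. w i = 0) \<and> (\<Sum>i<n. w i) = 1 \<and>
      (\<forall>i<n. (\<Sum>j<n. A i j * w j) = l * w i)"
    define h where "h i = w i / g i" for i
    define c where "c = Min (h ` {..<n})"
    have fin: "finite (h ` {..<n})" and ne: "h ` {..<n} \<noteq> {}" using n by auto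
    have cle: "c \<le> h j" if "j < n" for j unfolding c_def using fin that by (intro Min_le) auto
    obtain i0 where i0: "i0 < n" "h i0 = c" using Min_in[OF fin ne] unfolding c_def by auto
    define u where "u j = w j - c * g j" for j
    have unn: "u j \<ge> 0" if "j < n" for j
      using cle[OF that] gpos[OF that] unfolding u_def h_def by (simp add: le_divide_eq)
    have ui0: "u i0 = 0" using i0 gpos[OF i0(1)] unfolding u_def h_def by (auto simp: field_simps)
    have "(\<Sum>j<n. A i0 j * u j) = (\<Sum>j<n. A i0 j * w j) - c * (\<Sum>j<n. A i0 j * g j)"
      unfolding u_def by (simp add: algebra_simps sum_subtractf sum_distrib_left)
    also have "\<dots> = l * u i0" using w eig[OF i0(1)] i0 unfolding u_def by (simp add: algebra_simps)
    finally have "(\<Sum>j<n. A i0 j * u j) = 0" using ui0 by simp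
    hence "\<forall>j\<in>{..<n}. A i0 j * u j = 0"
    proof (subst sum_nonneg_eq_0_iff[symmetric])
      show "\<And>x. x \<in> {..<n} \<Longrightarrow> 0 \<le> A i0 x * u x"
        using Apos i0 unn by (simp add: less_imp_le)
    qed auto
    hence wj: "w j = c * g j" if "j < n" for j
      using that Apos[OF i0(1) that] unfolding u_def by (metis lessThan_iff less_irrefl mult_eq_0_iff eq_iff_diff_eq_0)
    have "1 = (\<Sum>j<n. c * g j)" using w wj by (metis (no_types, lifting) lessThan_iff sum.cong)
    hence "c * S = 1" by (simp add: S_def sum_distrib_left)
    hence c: "c = 1 / S" using Spos by (simp add: field_simps)
    show "w = (\<lambda>i. if i < n then g i / S else 0)"
      using w wj c by (auto simp: fun_eq_iff)
  qed
qed


definition gg :: "real \<Rightarrow> real \<Rightarrow> real \<Rightarrow> nat \<Rightarrow> real" where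
  "gg a b d i = (if i = 0 then 1 else if i = 1 then root 3 (a*b*d) / a else d / root 3 (a*b*d))"

lemma sum3: "(\<Sum>j<(3::nat). f j) = f 0 + f 1 + (f 2 :: real)"
  by (simp add: numeral_3_eq_3 numeral_2_eq_2 lessThan_Suc)

lemma lt3: "(i::nat) < 3 \<longleftrightarrow> i = 0 \<or> i = 1 \<or> i = 2" by auto

lemma recip_one:
  fixes x :: real assumes "x > 0" "x = 1 / x" shows "x = 1"
proof -
  have "x * x = 1" using assms by (simp add: field_simps)
  hence "(x - 1) * (x + 1) = 0" by (simp add: algebra_simps)
  thus ?thesis using assms(1) by simp
qed

lemma EM3:
  assumes "pcm 3 B"
  shows "EM 3 B = (\<lambda>i. if i<3 then gg (B 0 1) (B 1 2) (B 2 0) i / (\<Sum>j<3. gg (B 0 1) (B 1 2) (B 2 0) j) else 0)"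
proof (rule EM_general)
  have P: "\<And>i j. i<3 \<Longrightarrow> j<3 \<Longrightarrow> B i j > 0 \<and> B j i = 1 / B i j" using assms unfolding pcm_def by blast
  show "\<And>i j. i<3 \<Longrightarrow> j<3 \<Longrightarrow> B i j > 0" using P by blast
  define a where "a = B 0 1"
  define b where "b = B 1 2"
  define d where "d = B 2 0"
  define s where "s = root 3 (a*b*d)"
  have a: "a > 0" unfolding a_def using P[of 0 1] by simp
  have b: "b > 0" unfolding b_def using P[of 1 2] by simp
  have d: "d > 0" unfolding d_def using P[of 2 0] by simp
  have s: "s > 0" unfolding s_def using a b d by (intro real_root_gt_zero) auto
  have s3: "s^3 = a*b*d" unfolding s_def using a b d by (intro real_root_pow_pos) auto
  have d1: "B 0 0 = 1" "B 1 1 = 1" "B 2 2 = 1"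
    using P[of 0 0] P[of 1 1] P[of 2 2] recip_one by auto
  have r: "B 1 0 = 1/a" "B 2 1 = 1/b" "B 0 2 = 1/d"
    using P[of 0 1] P[of 1 2] P[of 2 0] unfolding a_def b_def d_def by auto
  show "\<And>i. i<3 \<Longrightarrow> gg (B 0 1) (B 1 2) (B 2 0) i > 0"
    unfolding a_def[symmetric] b_def[symmetric] d_def[symmetric] gg_def s_def[symmetric]
    using a d s by auto
  show "0 < (3::nat)" by simp
  fix i :: nat assume i: "i < 3"
  have G: "gg (B 0 1) (B 1 2) (B 2 0) = (\<lambda>j. if j = 0 then 1 else if j = 1 then s / a else d / s)"
    unfolding a_def b_def d_def s_def gg_def by (rule refl)
  have row0: "B 0 0 * 1 + B 0 1 * (s/a) + B 0 2 * (d/s) = (1 + s + 1/s) * 1"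
  proof -
    have "a * (s/a) = s" "1/d * (d/s) = 1/s" using a d s by auto
    then show ?thesis using d1 r a_def by simp
  qed
  have row1: "B 1 0 * 1 + B 1 1 * (s/a) + B 1 2 * (d/s) = (1 + s + 1/s) * (s/a)"
  proof -
    have e1: "b * (d/s) = s*s/a"
    proof -
      have "s*s*s = a*b*d" using s3 by (simp add: power3_eq_cube)
      then show ?thesis using a s by (simp add: field_simps)
    qed
    have e2: "(1 + s + 1/s) * (s/a) = s/a + s*s/a + 1/a" using s a by (simp add: field_simps)
    show ?thesis using d1 r e1 e2 b_def by simp
  qed
  have row2: "B 2 0 * 1 + B 2 1 * (s/a) + B 2 2 * (d/s) = (1 + s + 1/s) * (d/s)"
  proof -
    have e1: "1/b * (s/a) = d/(s*s)"
    proof -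
      have "s*s*s = a*b*d" using s3 by (simp add: power3_eq_cube)
      then show ?thesis using a b s by (simp add: field_simps)
    qed
    have e2: "(1 + s + 1/s) * (d/s) = d/s + d + d/(s*s)" using s by (simp add: field_simps)
    show ?thesis using d1 r e1 e2 d_def by simp
  qed
  show "(\<Sum>j<3. B i j * gg (B 0 1) (B 1 2) (B 2 0) j) = (1 + s + 1/s) * gg (B 0 1) (B 1 2) (B 2 0) i"
    unfolding G sum3 using i row0 row1 row2 unfolding lt3 by auto
qed

lemma perm_cases:
  fixes i j k :: nat
  assumes "i < 3" "j < 3" "k < 3" "i \<noteq> j" "j \<noteq> k" "i \<noteq> k" "\<alpha> > 0"
  shows "\<exists>\<beta>>0. alpha_transform A i j k \<alpha> = alpha_transform A 0 1 2 \<beta>"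
proof -
  have "(i,j,k) \<in> {(0,1,2),(1,2,0),(2,0,1),(0,2,1),(2,1,0),(1,0,2)}"
    using assms unfolding lt3 by auto
  then show ?thesis
  proof (elim insertE emptyE)
    assume "(i,j,k) = (0,1,2)" then show ?thesis using assms by (intro exI[of _ \<alpha>]) auto
  next
    assume "(i,j,k) = (1,2,0)" then show ?thesis using assms
      by (intro exI[of _ \<alpha>]) (auto simp: alpha_transform_def fun_eq_iff)
  next
    assume "(i,j,k) = (2,0,1)" then show ?thesis using assms
      by (intro exI[of _ \<alpha>]) (auto simp: alpha_transform_def fun_eq_iff)
  next
    assume "(i,j,k) = (0,2,1)" then show ?thesis using assms
      by (intro exI[of _ "1/\<alpha>"]) (auto simp: alpha_transform_def fun_eq_iff)
  next
    assume "(i,j,k) = (2,1,0)" then show ?thesis using assms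
      by (intro exI[of _ "1/\<alpha>"]) (auto simp: alpha_transform_def fun_eq_iff)
  next
    assume "(i,j,k) = (1,0,2)" then show ?thesis using assms
      by (intro exI[of _ "1/\<alpha>"]) (auto simp: alpha_transform_def fun_eq_iff)
  qed
qed

lemma at_cases: "alpha_transform A i j k \<beta> p q \<in> {\<beta> * A p q, A p q / \<beta>, A p q}"
  by (simp add: alpha_transform_def)
lemma pcm_transform:
  assumes "pcm 3 A" "\<beta> > 0"
  shows "pcm 3 (alpha_transform A 0 1 2 \<beta>)"
  unfolding pcm_def
proof (intro allI impI conjI)
  fix p q :: nat assume p: "p < 3" and q: "q < 3"
  have P1: "A p q > 0" using assms p q unfolding pcm_def by blast
  have P2: "A q p = 1 / A p q" using assms p q unfolding pcm_def by blast
  show "0 < alpha_transform A 0 1 2 \<beta> p q"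
    using at_cases[of A 0 1 2 \<beta> p q] P1 assms(2) by auto
  show "alpha_transform A 0 1 2 \<beta> q p = 1 / alpha_transform A 0 1 2 \<beta> p q"
    unfolding alpha_transform_def P2 using assms(2) P1 by (auto simp: field_simps)
qed

lemma gg_scale:
  assumes "a > 0" "b > 0" "d > 0" "\<beta> > 0"
  shows "gg (\<beta>*a) (\<beta>*b) (\<beta>*d) = gg a b d"
proof -
  have "root 3 (\<beta>*a*(\<beta>*b)*(\<beta>*d)) = root 3 (\<beta>^3 * (a*b*d))"
    by (simp add: power3_eq_cube algebra_simps)
  also have "\<dots> = \<beta> * root 3 (a*b*d)"
    using assms by (simp add: real_root_mult real_root_power_cancel)
  finally have r: "root 3 (\<beta>*a*(\<beta>*b)*(\<beta>*d)) = \<beta> * root 3 (a*b*d)" .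
  show ?thesis unfolding gg_def r fun_eq_iff using assms by auto
qed

theorem corollary3p1:
  fixes A :: "nat \<Rightarrow> nat \<Rightarrow> real" and i j k :: nat and \<alpha> :: real
  assumes "pcm 3 A"
    and "i < 3" and "j < 3" and "k < 3"
    and "i \<noteq> j" and "j \<noteq> k" and "i \<noteq> k"
    and "\<alpha> > 0"
  shows "EM 3 (alpha_transform A i j k \<alpha>) = EM 3 A"
proof -
  obtain \<beta> where \<beta>: "\<beta> > 0" "alpha_transform A i j k \<alpha> = alpha_transform A 0 1 2 \<beta>"
    using perm_cases[OF assms(2-8)] by blast
  have pos: "A 0 1 > 0" "A 1 2 > 0" "A 2 0 > 0" using assms(1) lt3 unfolding pcm_def by blast+
  have e: "alpha_transform A 0 1 2 \<beta> 0 1 = \<beta> * A 0 1"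
    "alpha_transform A 0 1 2 \<beta> 1 2 = \<beta> * A 1 2"
    "alpha_transform A 0 1 2 \<beta> 2 0 = \<beta> * A 2 0"
    unfolding alpha_transform_def by auto
  show ?thesis
    unfolding \<beta>(2) EM3[OF pcm_transform[OF assms(1) \<beta>(1)]] EM3[OF assms(1)] e
      gg_scale[OF pos \<beta>(1)] by (rule refl)
qed

end
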